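(* Let $(a_i,b_i)_{i\ge1}$ satisfy $\underline a\le a_i\le\bar a<0$ and $0<\underline b\le b_i\le\bar b$ for all $i$. For $N\ge2$ let $U^*=(u_1^*,\dots,u_N^* )$ be the maximizer of $\sum_{i=1}^N(a_iu_i^2+b_iu_i)$ subject to $\sum_{i=1}^Nu_i=0$, and let $W^*=(w_2^*,\dots,w_N^* )$ be the maximizer of $\sum_{i=2}^N(a_iu_i^2+b_iu_i)$ subject to $\sum_{i=2}^Nu_i=0$. Then there is a constant $C$, independent of $N$, such that $|u_i^*-w_i^*|\le C/N$ for all $2\le i\le N$ and all $N\ge2$; in particular $(u_2^*,\dots,u_N^* )-W^*\to0$ componentwise as $N\to\infty$. *)

theory Defs
  imports Complex_Main
begin

definition quad_obj :: "(nat \<Rightarrow> real) \<Rightarrow> (nat \<Rightarrow> real) \<Rightarrow> nat set \<Rightarrow> (nat \<Rightarrow> real) \<Rightarrow> real" where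
  "quad_obj a b I u = (\<Sum>i\<in>I. a i * (u i)^2 + b i * u i)"

definition is_maximizer :: "(nat \<Rightarrow> real) \<Rightarrow> (nat \<Rightarrow> real) \<Rightarrow> nat set \<Rightarrow> (nat \<Rightarrow> real) \<Rightarrow> bool" where
  "is_maximizer a b I u \<longleftrightarrow>
     (\<Sum>i\<in>I. u i) = 0 \<and>
     (\<forall>v. (\<Sum>i\<in>I. v i) = 0 \<longrightarrow> quad_obj a b I v \<le> quad_obj a b I u)"

end

theory Submission
  imports Defs
begin


lemma char:
  fixes a b u :: "nat \<Rightarrow> real"
  assumes fin: "finite I" and ne: "I \<noteq> {}" and neg: "\<forall>j\<in>I. a j < 0"
    and mx: "is_maximizer a b I u" and iI: "i \<in> I"
  shows "u i = ((\<Sum>j\<in>I. b j / a j) / (\<Sum>j\<in>I. 1 / a j) - b i) / (2 * a i)"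
proof -
  define S where "S = (\<Sum>j\<in>I. 1 / a j)"
  define T where "T = (\<Sum>j\<in>I. b j / a j)"
  define lam where "lam = T / S"
  define us where "us = (\<lambda>j. (lam - b j) / (2 * a j))"
  have "0 < (\<Sum>j\<in>I. - (1 / a j))"
    using fin ne neg by (intro sum_pos) (auto simp: divide_neg_pos)
  then have Sneg: "S < 0" unfolding S_def by (simp add: sum_negf)
  have lamS: "lam * S = T" unfolding lam_def using Sneg by simp
  have "(\<Sum>j\<in>I. us j) = (\<Sum>j\<in>I. lam / 2 * (1 / a j) - (b j / a j) / 2)"
    unfolding us_def using neg by (intro sum.cong) (auto simp: field_simps)
  also have "\<dots> = lam / 2 * S - T / 2"
    unfolding S_def T_def by (simp add: sum_subtractf sum_distrib_left sum_divide_distrib)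
  also have "\<dots> = 0" using lamS by simp
  finally have us_sum: "(\<Sum>j\<in>I. us j) = 0" .
  have key: "\<And>j. j \<in> I \<Longrightarrow> 2 * a j * us j + b j = lam"
    unfolding us_def using neg by (auto simp: field_simps)
  have u_sum: "(\<Sum>j\<in>I. u j) = 0" using mx unfolding is_maximizer_def by simp
  have le: "quad_obj a b I us \<le> quad_obj a b I u"
    using mx us_sum unfolding is_maximizer_def by blast
  have "quad_obj a b I u - quad_obj a b I us
      = (\<Sum>j\<in>I. a j * (u j - us j)^2 + lam * (u j - us j))"
    unfolding quad_obj_def sum_subtractf[symmetric]
  proof (intro sum.cong refl)
    fix j assume "j \<in> I"
    then have "lam = 2 * a j * us j + b j" using key by simp
    then show "a j * (u j)\<^sup>2 + b j * u j - (a j * (us j)\<^sup>2 + b j * us j) =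
         a j * (u j - us j)\<^sup>2 + lam * (u j - us j)"
      by (simp add: power2_eq_square algebra_simps)
  qed
  also have "\<dots> = (\<Sum>j\<in>I. a j * (u j - us j)^2) + lam * ((\<Sum>j\<in>I. u j) - (\<Sum>j\<in>I. us j))"
    by (simp add: sum.distrib sum_distrib_left sum_subtractf algebra_simps)
  also have "\<dots> = (\<Sum>j\<in>I. a j * (u j - us j)^2)" using u_sum us_sum by simp
  finally have "0 \<le> (\<Sum>j\<in>I. a j * (u j - us j)^2)" using le by simp
  then have "(\<Sum>j\<in>I. - (a j * (u j - us j)^2)) \<le> 0" by (simp add: sum_negf)
  moreover have nn: "\<forall>j\<in>I. 0 \<le> - (a j * (u j - us j)^2)"
    using neg by (auto simp: mult_nonpos_nonneg)
  ultimately have "(\<Sum>j\<in>I. - (a j * (u j - us j)^2)) = 0"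
    by (meson antisym sum_nonneg)
  then have "\<forall>j\<in>I. - (a j * (u j - us j)^2) = 0"
    using sum_nonneg_eq_0_iff[OF fin, of "\<lambda>j. - (a j * (u j - us j)^2)"] nn by simp
  then have "a i * (u i - us i)^2 = 0" using iI by simp
  then have "u i = us i" using neg iI by auto
  then show ?thesis unfolding us_def lam_def T_def S_def .
qed

lemma sum_bounds:
  fixes a :: "nat \<Rightarrow> real"
  assumes "finite I" "\<forall>j\<in>I. a j < 0" "\<forall>j\<in>I. lo \<le> b j \<and> b j \<le> hi"
  shows "hi * (\<Sum>j\<in>I. 1 / a j) \<le> (\<Sum>j\<in>I. b j / a j)"
    and "(\<Sum>j\<in>I. b j / a j) \<le> lo * (\<Sum>j\<in>I. 1 / a j)"
proof -
  have "hi * (\<Sum>j\<in>I. 1 / a j) = (\<Sum>j\<in>I. hi / a j)" by (simp add: sum_distrib_left)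
  also have "\<dots> \<le> (\<Sum>j\<in>I. b j / a j)"
    using assms by (intro sum_mono) (auto simp: divide_le_cancel)
  finally show "hi * (\<Sum>j\<in>I. 1 / a j) \<le> (\<Sum>j\<in>I. b j / a j)" .
  have "(\<Sum>j\<in>I. b j / a j) \<le> (\<Sum>j\<in>I. lo / a j)"
    using assms by (intro sum_mono) (auto simp: divide_le_cancel)
  also have "\<dots> = lo * (\<Sum>j\<in>I. 1 / a j)" by (simp add: sum_distrib_left)
  finally show "(\<Sum>j\<in>I. b j / a j) \<le> lo * (\<Sum>j\<in>I. 1 / a j)" .
qed


lemma part1:
  fixes a b :: "nat \<Rightarrow> real" and a_lo a_hi b_lo b_hi :: real
  assumes ahi: "a_hi < 0"
    and A: "\<And>i. i \<ge> 1 \<Longrightarrow> a_lo \<le> a i \<and> a i \<le> a_hi"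
    and B: "\<And>i. i \<ge> 1 \<Longrightarrow> b_lo \<le> b i \<and> b i \<le> b_hi"
    and N: "N \<ge> 2" and mu: "is_maximizer a b {1..N} u" and mw: "is_maximizer a b {2..N} w"
    and iI: "i \<in> {2..N}"
  shows "\<bar>u i - w i\<bar> \<le> ((b_hi - b_lo) * (- a_lo) / a_hi^2) / real N"
proof -
  have neg1: "\<forall>j\<in>{1..N}. a j < 0" using A ahi by force
  have neg2: "\<forall>j\<in>{2..N}. a j < 0"
  proof
    fix j assume "j \<in> {2..N}"
    then have "1 \<le> j" by simp
    then show "a j < 0" using A[of j] ahi by linarith
  qed
  have B1: "\<forall>j\<in>{1..N}. b_lo \<le> b j \<and> b j \<le> b_hi" using B by force
  define S where "S = (\<Sum>j\<in>{1..N}. 1 / a j)"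
  define T where "T = (\<Sum>j\<in>{1..N}. b j / a j)"
  define S' where "S' = (\<Sum>j\<in>{2..N}. 1 / a j)"
  define T' where "T' = (\<Sum>j\<in>{2..N}. b j / a j)"
  define lam where "lam = T / S"
  define mu where "mu = T' / S'"
  have ui: "u i = (lam - b i) / (2 * a i)"
    using char[OF _ _ neg1 mu] iI unfolding lam_def T_def S_def by auto
  have wi: "w i = (mu - b i) / (2 * a i)"
    using char[OF _ _ neg2 mw] iI unfolding mu_def T'_def S'_def by auto
  have split: "{1..N} = insert 1 {2..N}" using N by auto
  have SS: "S = 1 / a 1 + S'" unfolding S_def S'_def split by simp
  have TT: "T = b 1 / a 1 + T'" unfolding T_def T'_def split by simp
  have a1: "a 1 \<le> a_hi" "a_lo \<le> a 1" using A[of 1] by auto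
  have aii: "a i \<le> a_hi" "a_lo \<le> a i" using A[of i] iI by auto
  have alo: "a_lo < 0" using a1 ahi by linarith
  have "S' \<le> (\<Sum>j\<in>{2..N}. 1 / a_lo)" unfolding S'_def
  proof (intro sum_mono)
    fix j assume "j \<in> {2..N}"
    then have "a_lo \<le> a j" "a j < 0" using A[of j] ahi by auto
    then show "1 / a j \<le> 1 / a_lo" using alo by (simp add: divide_simps)
  qed
  also have "\<dots> = real (N - 1) / a_lo" using N by simp
  finally have S'le: "S' \<le> real (N - 1) / a_lo" .
  have "real (N - 1) / a_lo < 0" using N alo by (simp add: divide_pos_neg)
  then have S'neg: "S' < 0" using S'le by linarith
  have a1neg: "a 1 < 0" using a1 ahi by linarith
  have Sneg: "S < 0" using SS S'neg a1neg by (simp add: divide_neg_pos add_neg_neg)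
  have "b_hi * S \<le> T" "T \<le> b_lo * S"
    using sum_bounds[OF _ neg1 B1] unfolding S_def T_def by auto
  then have laml: "b_lo \<le> lam" and lamh: "lam \<le> b_hi"
    unfolding lam_def using Sneg by (auto simp: divide_simps)
  have b1: "b_lo \<le> b 1" "b 1 \<le> b_hi" using B[of 1] by auto
  have hS: "a 1 * S = 1 + a 1 * S'" unfolding SS using a1neg by (simp add: field_simps)
  have hT: "a 1 * T = b 1 + a 1 * T'" unfolding TT using a1neg by (simp add: field_simps)
  have e1: "b 1 * S - T = b 1 * S' - T'" unfolding SS TT by (simp add: algebra_simps)
  have "a 1 * T * S' - a 1 * T' * S = (a 1 * T) * S' - T' * (a 1 * S)" by algebra
  also have "\<dots> = (b 1 + a 1 * T') * S' - T' * (1 + a 1 * S')" by (simp only: hS hT)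
  also have "\<dots> = b 1 * S' - T'" by algebra
  finally have e2: "a 1 * T * S' - a 1 * T' * S = b 1 * S' - T'" .
  have nz: "S \<noteq> 0" "S' \<noteq> 0" "a 1 \<noteq> 0" using Sneg S'neg a1neg by auto
  have "lam - mu = (a 1 * T * S' - a 1 * T' * S) / (a 1 * S * S')"
    unfolding lam_def mu_def using nz by (simp add: field_simps)
  also have "\<dots> = (b 1 * S - T) / (a 1 * S * S')" using e1 e2 by simp
  also have "\<dots> = (b 1 - lam) / (a 1 * S')" unfolding lam_def using nz by (simp add: field_simps)
  finally have diff: "lam - mu = (b 1 - lam) / (a 1 * S')" .
  have ai0: "a i \<noteq> 0" using aii ahi by auto
  have "u i - w i = (lam - mu) / (2 * a i)" unfolding ui wi using ai0 by (simp add: field_simps)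
  also have "\<dots> = (b 1 - lam) / (2 * a i * a 1 * S')" unfolding diff
    by (simp add: field_simps)
  finally have "\<bar>u i - w i\<bar> = \<bar>b 1 - lam\<bar> / (2 * \<bar>a i\<bar> * \<bar>a 1\<bar> * \<bar>S'\<bar>)"
    by (simp add: abs_mult)
  also have "\<dots> \<le> (b_hi - b_lo) / (a_hi^2 * real N / (- a_lo))"
  proof (rule frac_le)
    show "0 \<le> b_hi - b_lo" using b1 by linarith
    show "\<bar>b 1 - lam\<bar> \<le> b_hi - b_lo" using b1 laml lamh by linarith
    show "0 < a_hi^2 * real N / (- a_lo)" using ahi alo N by (intro divide_pos_pos mult_pos_pos) auto
    have h1: "- a_hi \<le> \<bar>a i\<bar>" "- a_hi \<le> \<bar>a 1\<bar>" using aii a1 ahi by auto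
    have "real N / 2 \<le> real (N - 1)" using N by (simp add: of_nat_diff)
    then have "real N / 2 / (- a_lo) \<le> real (N - 1) / (- a_lo)"
      using alo by (intro divide_right_mono) auto
    also have "\<dots> \<le> \<bar>S'\<bar>" using S'le S'neg alo by (simp add: divide_simps)
    finally have h2: "real N / 2 / (- a_lo) \<le> \<bar>S'\<bar>" .
    have "(- a_hi) * (- a_hi) \<le> \<bar>a i\<bar> * \<bar>a 1\<bar>"
      using h1 ahi by (intro mult_mono) auto
    then have "(- a_hi) * (- a_hi) * (real N / 2 / (- a_lo)) \<le> \<bar>a i\<bar> * \<bar>a 1\<bar> * \<bar>S'\<bar>"
      by (rule mult_mono[OF _ h2]) (use alo in \<open>auto simp: divide_nonneg_neg\<close>)
    then show "a_hi^2 * real N / (- a_lo) \<le> 2 * \<bar>a i\<bar> * \<bar>a 1\<bar> * \<bar>S'\<bar>"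
      by (simp add: power2_eq_square field_simps)
  qed
  also have "\<dots> = ((b_hi - b_lo) * (- a_lo) / a_hi^2) / real N"
    using ahi alo N by (simp add: field_simps)
  finally show ?thesis .
qed

theorem lemma1:
  fixes a b :: "nat \<Rightarrow> real" and a_lo a_hi b_lo b_hi :: real
  assumes "a_hi < 0" and "0 < b_lo"
    and "\<And>i. i \<ge> 1 \<Longrightarrow> a_lo \<le> a i \<and> a i \<le> a_hi"
    and "\<And>i. i \<ge> 1 \<Longrightarrow> b_lo \<le> b i \<and> b i \<le> b_hi"
  shows "(\<exists>C. \<forall>N::nat. N \<ge> 2 \<longrightarrow> (\<forall>u w. is_maximizer a b {1..N} u \<longrightarrow> is_maximizer a b {2..N} w \<longrightarrow>
            (\<forall>i\<in>{2..N}. \<bar>u i - w i\<bar> \<le> C / real N)))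
      \<and> (\<forall>U W :: nat \<Rightarrow> nat \<Rightarrow> real.
           (\<forall>N. N \<ge> 2 \<longrightarrow> is_maximizer a b {1..N} (U N) \<and> is_maximizer a b {2..N} (W N)) \<longrightarrow>
           (\<forall>i\<ge>2. (\<lambda>N. U N i - W N i) \<longlonglongrightarrow> 0))"
proof -
  define C where "C = (b_hi - b_lo) * (- a_lo) / a_hi^2"
  have P: "\<And>N u w i. N \<ge> 2 \<Longrightarrow> is_maximizer a b {1..N} u \<Longrightarrow> is_maximizer a b {2..N} w \<Longrightarrow>
      i \<in> {2..N} \<Longrightarrow> \<bar>u i - w i\<bar> \<le> C / real N"
    unfolding C_def by (rule part1[where a=a and b=b, OF assms(1,3,4)])
  show ?thesis
  proof (intro conjI allI impI)
    show "\<exists>C. \<forall>N::nat. N \<ge> 2 \<longrightarrow> (\<forall>u w. is_maximizer a b {1..N} u \<longrightarrow> is_maximizer a b {2..N} w \<longrightarrow>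
            (\<forall>i\<in>{2..N}. \<bar>u i - w i\<bar> \<le> C / real N))"
      using P by blast
  next
    fix U W :: "nat \<Rightarrow> nat \<Rightarrow> real" and i :: nat
    assume H: "\<forall>N. N \<ge> 2 \<longrightarrow> is_maximizer a b {1..N} (U N) \<and> is_maximizer a b {2..N} (W N)"
      and i: "2 \<le> i"
    have ev: "eventually (\<lambda>N. norm (U N i - W N i) \<le> norm (C / real N) * 1) sequentially"
      using eventually_ge_at_top[of i]
    proof eventually_elim
      case (elim N)
      have "norm (U N i - W N i) \<le> C / real N" using P[of N "U N" "W N" i] H i elim by auto
      moreover have "C / real N \<le> \<bar>C\<bar> / real N" by (intro divide_right_mono) auto
      ultimately show ?case by simp
    qed
    have "(\<lambda>N. C / real N) \<longlonglongrightarrow> 0"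
      by (rule lim_const_over_n)
    then show "(\<lambda>N. U N i - W N i) \<longlonglongrightarrow> 0"
      by (rule tendsto_0_le[OF _ ev])
  qed
qed

end
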